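(* Let $K$ satisfy the standing assumptions below together with condition (B) for some $\sigma\in(0,2)$, let $0<s<1<p<\infty$, $\frac{2-s}{p}+\frac{p}{p-1}<\alpha<\infty$ and $2+p+\frac{s-2}{p}<b<\infty$. For $f\in L^1(\mathbb{D},dA)$ define $$Tf(z)=\int_{\mathbb{D}}\frac{(1-|w|^2)^{b-1}}{|1-\bar w z|^{\alpha+b}}f(w)\,dA(w),\quad z\in\mathbb{D}.$$ If $|f(z)|^p(1-|z|^2)^{p-2+s}\,dA(z)$ is a $K$-Carleson measure, then $|Tf(z)|^p(1-|z|^2)^{p\alpha-2+s}\,dA(z)$ is also a $K$-Carleson measure.
   Context: $\mathbb{D}$ is the open unit disc and $dA$ the area measure normalized so that $A(\mathbb{D})=1$. Standing assumptions: $K:[0,\infty)\to[0,\infty)$ is nondecreasing, right-continuous, not identically zero, and with $\varphi_K(x)=\sup_{0<t\le 1}K(tx)/K(t)$ satisfies (A) $\int_0^1\frac{\varphi_K(x)}{x}\,dx<\infty$. Condition (B) for $\sigma>0$: $\int_1^\infty\frac{\varphi_K(x)}{x^{1+\sigma}}\,dx<\infty$. For an arc $I\subset\partial\mathbb{D}$, $|I|=\frac1{2\pi}\int_I|dz|$ and $S(I)=\{re^{i\theta}:e^{i\theta}\in I,\ 1-|I|\le r<1\}$; a positive Borel measure $\mu$ on $\mathbb{D}$ is a $K$-Carleson measure if $\sup_{I\subset\partial\mathbb{D}}\mu(S(I))/K(|I|)<\infty$. *)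

theory Defs
  imports "HOL-Analysis.Analysis"
begin

definition dA :: "complex measure" where
  "dA = density lborel (\<lambda>z. ennreal (indicator (ball 0 1) z / pi))"

definition phiK :: "(real \<Rightarrow> real) \<Rightarrow> real \<Rightarrow> ennreal" where
  "phiK K x = (SUP t\<in>{0<..1}. ennreal (K (t * x) / K t))"

definition condA :: "(real \<Rightarrow> real) \<Rightarrow> bool" where
  "condA K \<longleftrightarrow> (\<integral>\<^sup>+ x. indicator {0<..1} x * phiK K x * ennreal (1 / x) \<partial>lborel) < \<infinity>"

definition condB :: "(real \<Rightarrow> real) \<Rightarrow> real \<Rightarrow> bool" where
  "condB K \<sigma> \<longleftrightarrow>
     (\<integral>\<^sup>+ x. indicator {1..} x * phiK K x * ennreal (1 / x powr (1 + \<sigma>)) \<partial>lborel) < \<infinity>"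

text \<open>Standing assumptions on K (with K(t) > 0 for t > 0 so that the quotients in phi_K make sense).\<close>
definition standing_K :: "(real \<Rightarrow> real) \<Rightarrow> bool" where
  "standing_K K \<longleftrightarrow>
     (\<forall>t\<ge>0. K t \<ge> 0) \<and> (\<forall>t>0. K t > 0) \<and>
     mono_on {0..} K \<and>
     (\<forall>t\<ge>0. continuous (at_right t) K) \<and>
     (\<exists>t\<ge>0. K t \<noteq> 0) \<and>
     condA K"

text \<open>Closed arc I = {e^{i phi} : theta <= phi <= theta + 2 pi l}, of normalized length |I| = l,
  and the Carleson box S(I) = {r e^{i phi} : e^{i phi} in I, 1 - l <= r < 1}.\<close>
definition arc :: "real \<Rightarrow> real \<Rightarrow> complex set" where
  "arc \<theta> l = {cis \<phi> | \<phi>. \<theta> \<le> \<phi> \<and> \<phi> \<le> \<theta> + 2 * pi * l}"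

definition carleson_box :: "real \<Rightarrow> real \<Rightarrow> complex set" where
  "carleson_box \<theta> l = {complex_of_real r * \<zeta> | r \<zeta>. \<zeta> \<in> arc \<theta> l \<and> 1 - l \<le> r \<and> r < 1}"

text \<open>mu is a K-Carleson measure: sup over arcs I of mu(S(I))/K(|I|) is finite;
  arcs are parametrized by a starting angle theta and normalized length 0 < l <= 1.\<close>
definition K_Carleson :: "(real \<Rightarrow> real) \<Rightarrow> complex measure \<Rightarrow> bool" where
  "K_Carleson K \<mu> \<longleftrightarrow>
     (\<exists>C::real. \<forall>\<theta> l. 0 < l \<and> l \<le> 1 \<longrightarrow> emeasure \<mu> (carleson_box \<theta> l) \<le> ennreal (C * K l))"

definition T_op :: "real \<Rightarrow> real \<Rightarrow> (complex \<Rightarrow> complex) \<Rightarrow> complex \<Rightarrow> complex" where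
  "T_op \<alpha> b f z = (LINT w|dA. complex_of_real ((1 - (cmod w)\<^sup>2) powr (b - 1)
                         / (cmod (1 - cnj w * z)) powr (\<alpha> + b)) * f w)"

end

theory Submission
  imports Defs
begin

lemma ennreal_term_le_suminf: "(f::nat \<Rightarrow> ennreal) i \<le> (\<Sum>n. f n)"
  using sum_le_suminf[OF summableI, of "{i}" f] by simp

lemma dyadic_pointwise:
  fixes R :: real and r0 \<beta> :: real
  assumes r0: "r0 > 0" and \<beta>: "\<beta> > 0"
  shows "ennreal (min 1 ((r0 / R) powr \<beta>)) \<le>
    (\<Sum>k. ennreal (2 powr \<beta> * (2 powr (-\<beta>)) ^ k) * indicator {x::real. x < r0 * 2 ^ k} R)" (is "_ \<le> ?S")
proof (cases "R < r0")
  case True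
  have "ennreal (min 1 ((r0 / R) powr \<beta>)) \<le> ennreal (2 powr \<beta> * (2 powr (-\<beta>)) ^ 0) * indicator {x::real. x < r0 * 2 ^ 0} R"
    using True \<beta> ge_one_powr_ge_zero[of 2 \<beta>] by (auto intro!: ennreal_leI min.coboundedI1)
  also have "\<dots> \<le> ?S" by (rule ennreal_term_le_suminf)
  finally show ?thesis .
next
  case False
  then have R: "R \<ge> r0" by simp
  have "\<exists>n. R / r0 < 2 ^ n" using real_arch_pow[of 2 "R/r0"] by auto
  then have ex: "\<exists>n. R < r0 * 2 ^ n" using r0 by (simp add: field_simps)
  define n where "n = (LEAST n. R < r0 * 2 ^ n)"
  have n1: "R < r0 * 2 ^ n" unfolding n_def by (rule LeastI_ex[OF ex])
  have n0: "n \<noteq> 0" using n1 R by (auto intro: ccontr)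
  then obtain m where m: "n = Suc m" by (cases n) auto
  have "\<not> R < r0 * 2 ^ m" using not_less_Least[of m "\<lambda>n. R < r0 * 2 ^ n"] unfolding n_def[symmetric] m by simp
  then have Rm: "r0 * 2 ^ m \<le> R" by simp
  have pos: "R > 0" using R r0 by simp
  have "(r0 / R) powr \<beta> \<le> (r0 / (r0 * 2 ^ m)) powr \<beta>"
    using Rm r0 pos \<beta> by (intro powr_mono2) (auto simp: field_simps)
  also have "\<dots> = (2 powr (-\<beta>)) ^ m"
  proof -
    have "r0 / (r0 * 2 ^ m) = 2 powr (- real m)"
      using r0 by (simp add: powr_minus powr_realpow divide_inverse)
    then have "(r0 / (r0 * 2 ^ m)) powr \<beta> = 2 powr (- \<beta> * real m)"
      by (simp add: powr_powr mult.commute)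
    also have "\<dots> = (2 powr (-\<beta>)) powr real m" by (simp add: powr_powr)
    also have "\<dots> = (2 powr (-\<beta>)) ^ m" by (simp add: powr_realpow)
    finally show ?thesis .
  qed
  also have "\<dots> = 2 powr \<beta> * (2 powr (-\<beta>)) ^ n"
    by (simp add: m powr_minus)
  finally have "ennreal (min 1 ((r0 / R) powr \<beta>)) \<le> ennreal (2 powr \<beta> * (2 powr (-\<beta>)) ^ n) * indicator {x::real. x < r0 * 2 ^ n} R"
    using n1 by (auto intro!: ennreal_leI)
  also have "\<dots> \<le> ?S" by (rule ennreal_term_le_suminf)
  finally show ?thesis .
qed

lemma dyadic_integral:
  fixes M :: "'a measure" and R :: "'a \<Rightarrow> real"
  assumes R[measurable]: "R \<in> borel_measurable M" and r0: "r0 > 0" and \<gamma>: "0 \<le> \<gamma>" "\<gamma> < \<beta>"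
    and A: "A \<ge> 0"
    and bound: "\<And>k. emeasure M {x\<in>space M. R x < r0 * 2 ^ k} \<le> ennreal (A * (2 powr \<gamma>) ^ k)"
  shows "(\<integral>\<^sup>+x. ennreal (min 1 ((r0 / R x) powr \<beta>)) \<partial>M) \<le> ennreal (A * 2 powr \<beta> / (1 - 2 powr (\<gamma> - \<beta>)))"
proof -
  define S where "S k = {x\<in>space M. R x < r0 * 2 ^ k}" for k :: nat
  have S[measurable]: "S k \<in> sets M" for k unfolding S_def by measurable
  define c where "c k = ennreal (2 powr \<beta> * (2 powr (-\<beta>)) ^ k)" for k :: nat
  have "(\<integral>\<^sup>+x. ennreal (min 1 ((r0 / R x) powr \<beta>)) \<partial>M) \<le> (\<integral>\<^sup>+x. (\<Sum>k. c k * indicator (S k) x) \<partial>M)"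
  proof (rule nn_integral_mono)
    fix x assume x: "x \<in> space M"
    have "indicator {y::real. y < r0 * 2 ^ k} (R x) = (indicator (S k) x :: ennreal)" for k
      using x by (auto simp: S_def indicator_def)
    then show "ennreal (min 1 ((r0 / R x) powr \<beta>)) \<le> (\<Sum>k. c k * indicator (S k) x)"
      using dyadic_pointwise[OF r0, of \<beta> "R x"] \<gamma> unfolding c_def by simp
  qed
  also have "\<dots> = (\<Sum>k. c k * emeasure M (S k))"
    by (subst nn_integral_suminf) (auto simp: nn_integral_cmult_indicator)
  also have "\<dots> \<le> (\<Sum>k. ennreal (2 powr \<beta> * A * (2 powr (\<gamma> - \<beta>)) ^ k))"
  proof (intro suminf_le summableI)
    fix k
    have "c k * emeasure M (S k) \<le> c k * ennreal (A * (2 powr \<gamma>) ^ k)"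
      using bound[of k] unfolding S_def by (intro mult_left_mono) auto
    also have "\<dots> = ennreal (2 powr \<beta> * A * (2 powr (\<gamma> - \<beta>)) ^ k)"
      unfolding c_def using A
      by (simp add: ennreal_mult''[symmetric] powr_diff powr_minus power_mult_distrib divide_inverse mult_ac power_inverse)
    finally show "c k * emeasure M (S k) \<le> ennreal (2 powr \<beta> * A * (2 powr (\<gamma> - \<beta>)) ^ k)" .
  qed
  also have "\<dots> = ennreal (\<Sum>k. 2 powr \<beta> * A * (2 powr (\<gamma> - \<beta>)) ^ k)"
  proof (rule suminf_ennreal2)
    have q: "2 powr (\<gamma> - \<beta>) < 1" using \<gamma> by (simp add: powr_less_one)
    show "summable (\<lambda>k. 2 powr \<beta> * A * (2 powr (\<gamma> - \<beta>)) ^ k)"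
      using q by (intro summable_mult summable_geometric) auto
  qed (use A in auto)
  also have "(\<Sum>k. 2 powr \<beta> * A * (2 powr (\<gamma> - \<beta>)) ^ k) = A * 2 powr \<beta> / (1 - 2 powr (\<gamma> - \<beta>))"
  proof -
    have q: "2 powr (\<gamma> - \<beta>) < 1" using \<gamma> by (simp add: powr_less_one)
    show ?thesis
      using q by (subst suminf_mult) (auto simp: suminf_geometric summable_geometric field_simps)
  qed
  finally show ?thesis .
qed

lemma space_dA[simp]: "space dA = UNIV" by (simp add: dA_def)
lemma sets_dA[simp, measurable_cong]: "sets dA = sets lborel" by (simp add: dA_def)

lemma ball_borel[measurable]: "ball (x::'a::metric_space) r \<in> sets borel"
  by (simp add: borel_open)

lemma dA_dens_meas[measurable]: "(\<lambda>z::complex. ennreal (indicator (ball 0 1) z / pi)) \<in> borel_measurable borel"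
  by (intro measurable_compose[OF _ measurable_ennreal] borel_measurable_divide borel_measurable_indicator) auto

lemma nn_integral_dA:
  assumes [measurable]: "g \<in> borel_measurable lborel"
  shows "(\<integral>\<^sup>+x. g x \<partial>dA) = (\<integral>\<^sup>+x. ennreal (indicator (ball 0 1) x / pi) * g x \<partial>lborel)"
  unfolding dA_def by (rule nn_integral_density) auto

lemma nn_integral_dA_restrict:
  assumes [measurable]: "g \<in> borel_measurable lborel"
  shows "(\<integral>\<^sup>+x. g x \<partial>dA) = (\<integral>\<^sup>+x. indicator (ball 0 1) x * g x \<partial>dA)"
  by (simp add: nn_integral_dA) (auto intro!: nn_integral_cong simp: indicator_def)

lemma emeasure_dA_le:
  assumes [measurable]: "S \<in> sets lborel"
  shows "emeasure dA S \<le> ennreal (1/pi) * emeasure lborel S"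
proof -
  have "emeasure dA S = (\<integral>\<^sup>+x. ennreal (indicator (ball 0 1) x / pi) * indicator S x \<partial>lborel)"
    using assms unfolding dA_def by (subst emeasure_density) auto
  also have "\<dots> \<le> (\<integral>\<^sup>+x. ennreal (1/pi) * indicator S x \<partial>lborel)"
    by (intro nn_integral_mono mult_right_mono) (auto simp: indicator_def)
  also have "\<dots> = ennreal (1/pi) * emeasure lborel S"
    using assms by (rule nn_integral_cmult_indicator)
  finally show ?thesis .
qed

lemma lborel_ball_le:
  fixes x :: complex assumes r: "r \<ge> 0"
  shows "emeasure lborel (ball x r) \<le> ennreal (4 * r^2)"
proof -
  define d where "d = Complex r r"
  have "ball x r \<subseteq> cbox (x - d) (x + d)"
  proof
    fix y assume "y \<in> ball x r"
    then have "cmod (x - y) < r" by (simp add: dist_norm)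
    then have "\<bar>Re (x - y)\<bar> \<le> r" "\<bar>Im (x - y)\<bar> \<le> r"
      using abs_Re_le_cmod[of "x-y"] abs_Im_le_cmod[of "x-y"] by linarith+
    then show "y \<in> cbox (x - d) (x + d)"
      by (auto simp: mem_box Basis_complex_def d_def)
  qed
  then have "emeasure lborel (ball x r) \<le> emeasure lborel (cbox (x - d) (x + d))"
    by (intro emeasure_mono) auto
  also have "\<dots> = ennreal (4 * r^2)"
    using r by (subst emeasure_lborel_cbox) (auto simp: Basis_complex_def d_def power2_eq_square)
  finally show ?thesis .
qed

lemma emeasure_dA_ball_le:
  fixes x :: complex assumes r: "r \<ge> 0"
  shows "emeasure dA (ball x r) \<le> ennreal (4 / pi * r^2)"
proof -
  have "emeasure dA (ball x r) \<le> ennreal (1/pi) * ennreal (4 * r^2)"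
  proof -
    have "emeasure dA (ball x r) \<le> ennreal (1/pi) * emeasure lborel (ball x r)"
      by (rule emeasure_dA_le) auto
    also have "\<dots> \<le> ennreal (1/pi) * ennreal (4 * r^2)"
      by (intro mult_left_mono lborel_ball_le[OF r]) auto
    finally show ?thesis .
  qed
  also have "\<dots> = ennreal (4 / pi * r^2)" by (simp add: ennreal_mult''[symmetric])
  finally show ?thesis .
qed

lemma emeasure_dA_UNIV: "emeasure dA UNIV \<le> ennreal (4/pi)"
proof -
  have "emeasure dA UNIV = (\<integral>\<^sup>+x. 1 \<partial>dA)" by simp
  also have "\<dots> = (\<integral>\<^sup>+x. ennreal (indicator (ball 0 1) (x::complex) / pi) * 1 \<partial>lborel)"
    unfolding dA_def by (rule nn_integral_density) auto
  also have "\<dots> \<le> (\<integral>\<^sup>+x. ennreal (1/pi) * indicator (ball 0 1) (x::complex) \<partial>lborel)"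
    by (intro nn_integral_mono) (auto simp: indicator_def)
  also have "\<dots> = ennreal (1/pi) * emeasure lborel (ball (0::complex) 1)"
    by (rule nn_integral_cmult_indicator) auto
  also have "\<dots> \<le> ennreal (1/pi) * ennreal (4 * 1^2)"
    by (intro mult_left_mono lborel_ball_le) auto
  also have "\<dots> = ennreal (4/pi)" by (simp add: ennreal_mult''[symmetric] del: ennreal_numeral)
  finally show ?thesis .
qed

lemma finite_measure_dA: "finite_measure dA"
  by (rule finite_measureI) (use emeasure_dA_UNIV in \<open>auto simp: top_unique\<close>)

interpretation dA: finite_measure dA by (rule finite_measure_dA)
interpretation dA2: pair_sigma_finite dA dA
  by (simp add: pair_sigma_finite_def dA.sigma_finite_measure_axioms)

lemma cmod_one_minus_sq:
  "(cmod (1 - cnj w * z))^2 = (cmod (z - w))^2 + (1 - (cmod z)^2) * (1 - (cmod w)^2)"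
  apply (simp only: cmod_power2)
  apply (simp add: power2_eq_square)
  apply algebra
  done

lemma geo1: "cmod z \<le> 1 \<Longrightarrow> cmod w \<le> 1 \<Longrightarrow> cmod (z - w) \<le> cmod (1 - cnj w * z)"
proof -
  assume "cmod z \<le> 1" "cmod w \<le> 1"
  then have "0 \<le> (1 - (cmod z)^2) * (1 - (cmod w)^2)"
    by (intro mult_nonneg_nonneg) (auto simp: power_le_one abs_square_le_1)
  then have "(cmod (z - w))^2 \<le> (cmod (1 - cnj w * z))^2" using cmod_one_minus_sq[of w z] by linarith
  then show ?thesis by (simp add: power2_le_iff_abs_le)
qed

lemma geo2: "cmod z \<le> 1 \<Longrightarrow> 1 - cmod w \<le> cmod (1 - cnj w * z)"
proof -
  assume z: "cmod z \<le> 1"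
  have "1 - cmod w \<le> 1 - cmod (cnj w * z)"
    using z by (simp add: norm_mult mult_left_le)
  also have "\<dots> \<le> cmod (1 - cnj w * z)"
    using norm_triangle_ineq2[of 1 "cnj w * z"] by simp
  finally show ?thesis .
qed

lemma geo2': "cmod w \<le> 1 \<Longrightarrow> 1 - cmod z \<le> cmod (1 - cnj w * z)"
proof -
  assume w: "cmod w \<le> 1"
  have "1 - cmod z \<le> 1 - cmod (cnj w * z)"
    using w by (simp add: norm_mult mult_left_le_one_le)
  also have "\<dots> \<le> cmod (1 - cnj w * z)"
    using norm_triangle_ineq2[of 1 "cnj w * z"] by simp
  finally show ?thesis .
qed

lemma geo3:
  assumes z: "cmod z \<le> 1" and w: "cmod w \<le> 1"
  shows "cmod ((if z = 0 then 1 else z / cmod z) - w) \<le> 2 * cmod (1 - cnj w * z)"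
proof -
  define \<zeta> where "\<zeta> = (if z = 0 then 1 else z / cmod z)"
  have "cmod (\<zeta> - z) = 1 - cmod z"
  proof (cases "z = 0")
    case False
    have "\<zeta> - z = (1 - cmod z) * (z / cmod z)" using False
      by (simp add: \<zeta>_def field_simps)
    moreover have "(1::complex) - of_real (cmod z) = of_real (1 - cmod z)" by simp
    ultimately show ?thesis using False z by (simp add: norm_mult norm_divide del: of_real_diff)
  qed (simp add: \<zeta>_def)
  then have "cmod (\<zeta> - w) \<le> (1 - cmod z) + cmod (z - w)"
    using norm_triangle_ineq[of "\<zeta> - z" "z - w"] by simp
  also have "\<dots> \<le> 2 * cmod (1 - cnj w * z)"
    using geo1[OF z w] geo2'[OF w, of z] by simp
  finally show ?thesis unfolding \<zeta>_def .
qed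

lemma one_minus_sq_le: "cmod w \<le> 1 \<Longrightarrow> 1 - (cmod w)^2 \<le> 2 * (1 - cmod w)"
proof -
  assume a: "cmod w \<le> 1"
  have "1 - (cmod w)^2 = (1 - cmod w) * (1 + cmod w)" by (simp add: power2_eq_square algebra_simps)
  also have "\<dots> \<le> (1 - cmod w) * 2" using a by (intro mult_left_mono) auto
  finally show ?thesis by simp
qed

lemma cnj_meas[measurable]: "cnj \<in> borel_measurable borel"
  by (intro borel_measurable_continuous_onI continuous_intros)

lemma R_meas[measurable]: "(\<lambda>w. cmod (1 - cnj w * z)) \<in> borel_measurable borel"
  by measurable

lemma emeasure_dA_restrict:
  assumes [measurable]: "S \<in> sets borel"
  shows "emeasure dA S = emeasure dA (S \<inter> ball 0 1)"
proof -
  have "emeasure dA S = (\<integral>\<^sup>+x. indicator S x \<partial>dA)" by simp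
  also have "\<dots> = (\<integral>\<^sup>+x. indicator (ball 0 1) x * indicator S x \<partial>dA)"
    by (rule nn_integral_dA_restrict) auto
  also have "\<dots> = (\<integral>\<^sup>+x. indicator (S \<inter> ball 0 1) x \<partial>dA)"
    by (intro nn_integral_cong) (auto simp: indicator_def)
  also have "\<dots> = emeasure dA (S \<inter> ball 0 1)" by simp
  finally show ?thesis .
qed

definition CF :: "real \<Rightarrow> real" where
  "CF c = 16 / pi * 2 powr (2 + c) / (1 - 2 powr (- c))"

lemma CF_pos: "c > 0 \<Longrightarrow> CF c > 0"
  unfolding CF_def by (auto intro!: divide_pos_pos simp: powr_less_one)

lemma FR:
  fixes z :: complex
  assumes c: "c > 0" and z: "cmod z < 1"
  shows "(\<integral>\<^sup>+w. ennreal (1 / cmod (1 - cnj w * z) powr (2 + c)) \<partial>dA) \<le> ennreal (CF c * (1 - cmod z) powr (-c))"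
proof -
  define \<delta> where "\<delta> = 1 - cmod z"
  have \<delta>: "\<delta> > 0" using z by (simp add: \<delta>_def)
  define R where "R w = cmod (1 - cnj w * z)" for w
  have R_meas'[measurable]: "R \<in> borel_measurable borel" unfolding R_def by measurable
  have "(\<integral>\<^sup>+w. ennreal (1 / cmod (1 - cnj w * z) powr (2 + c)) \<partial>dA)
      = (\<integral>\<^sup>+w. indicator (ball 0 1) w * ennreal (1 / R w powr (2 + c)) \<partial>dA)"
    unfolding R_def by (rule nn_integral_dA_restrict) measurable
  also have "\<dots> \<le> (\<integral>\<^sup>+w. ennreal (\<delta> powr (-(2+c))) * ennreal (min 1 ((\<delta> / R w) powr (2 + c))) \<partial>dA)"
  proof (intro nn_integral_mono)
    fix w
    show "indicator (ball 0 1) w * ennreal (1 / R w powr (2 + c)) \<le> ennreal (\<delta> powr (-(2+c))) * ennreal (min 1 ((\<delta> / R w) powr (2 + c)))"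
    proof (cases "w \<in> ball 0 1")
      case True
      then have "cmod w \<le> 1" by simp
      then have Rd: "\<delta> \<le> R w" using geo2'[of w z] by (simp add: R_def \<delta>_def)
      then have Rp: "R w > 0" using \<delta> by simp
      have "(\<delta> / R w) powr (2 + c) \<le> 1"
        using Rd \<delta> Rp c by (intro powr_le1) auto
      then have "min 1 ((\<delta> / R w) powr (2 + c)) = (\<delta> / R w) powr (2 + c)" by simp
      moreover have "\<delta> powr (-(2+c)) * (\<delta> / R w) powr (2 + c) = 1 / R w powr (2 + c)"
      proof -
        have "\<delta> powr (-(2+c)) * \<delta> powr (2 + c) = 1"
          using \<delta> by (simp add: powr_add[symmetric])
        then show ?thesis using \<delta> Rp by (simp add: powr_divide field_simps)
      qed
      ultimately show ?thesis using True \<delta> Rp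
        by (simp add: ennreal_mult''[symmetric])
    qed simp
  qed
  also have "\<dots> = ennreal (\<delta> powr (-(2+c))) * (\<integral>\<^sup>+w. ennreal (min 1 ((\<delta> / R w) powr (2 + c))) \<partial>dA)"
    by (rule nn_integral_cmult) measurable
  also have "\<dots> \<le> ennreal (\<delta> powr (-(2+c))) * ennreal (16 * \<delta>^2 / pi * 2 powr (2 + c) / (1 - 2 powr (2 - (2 + c))))"
  proof (intro mult_left_mono dyadic_integral)
    show "R \<in> borel_measurable dA" by measurable
    fix k :: nat
    have "{x \<in> space dA. R x < \<delta> * 2 ^ k} \<inter> ball 0 1 \<subseteq> ball (if z = 0 then 1 else z / cmod z) (2 * (\<delta> * 2 ^ k))"
    proof
      fix w assume w: "w \<in> {x \<in> space dA. R x < \<delta> * 2 ^ k} \<inter> ball 0 1"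
      then have "cmod ((if z = 0 then 1 else z / cmod z) - w) \<le> 2 * R w"
        using geo3[of z w] z unfolding R_def by auto
      then show "w \<in> ball (if z = 0 then 1 else z / cmod z) (2 * (\<delta> * 2 ^ k))"
        using w by (auto simp: dist_norm)
    qed
    then have "emeasure dA {x \<in> space dA. R x < \<delta> * 2 ^ k} \<le> emeasure dA (ball (if z = 0 then 1 else z / cmod z) (2 * (\<delta> * 2 ^ k)))"
      by (subst emeasure_dA_restrict) (auto intro!: emeasure_mono)
    also have "\<dots> \<le> ennreal (4 / pi * (2 * (\<delta> * 2 ^ k))^2)"
      using \<delta> by (intro emeasure_dA_ball_le) auto
    also have "\<dots> = ennreal (16 * \<delta>^2 / pi * (2 powr 2) ^ k)"
      by (simp add: power_mult_distrib power_mult[symmetric] mult.commute[of k 2] power_mult)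
    finally show "emeasure dA {x \<in> space dA. R x < \<delta> * 2 ^ k} \<le> ennreal (16 * \<delta>^2 / pi * (2 powr 2) ^ k)" .
  qed (use \<delta> c in auto)
  also have "\<dots> = ennreal (CF c * (1 - cmod z) powr (-c))"
  proof -
    have "\<delta> powr (-(2+c)) * (16 * \<delta>^2 / pi * 2 powr (2 + c) / (1 - 2 powr (2 - (2 + c)))) = CF c * \<delta> powr (-c)"
    proof -
      have h2: "\<delta>^2 = \<delta> powr 2" using \<delta> powr_realpow[of \<delta> 2] by simp
      have h: "\<delta> powr (-(2+c)) * \<delta>^2 = \<delta> powr (-c)"
      proof -
        have "\<delta> powr (-(2+c)) * \<delta> powr 2 = \<delta> powr (-(2+c) + 2)" by (rule powr_add[symmetric])
        then show ?thesis using h2 by simp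
      qed
      have "\<delta> powr (-(2+c)) * (16 * \<delta>^2 / pi * 2 powr (2 + c) / (1 - 2 powr (2 - (2 + c))))
          = (\<delta> powr (-(2+c)) * \<delta>^2) * (16 / pi * 2 powr (2 + c) / (1 - 2 powr (- c)))"
        by simp
      also have "\<dots> = CF c * \<delta> powr (-c)" unfolding h CF_def by simp
      finally show ?thesis .
    qed
    moreover have "0 \<le> 16 * \<delta>^2 / pi * 2 powr (2 + c) / (1 - 2 powr (2 - (2 + c)))"
    proof -
      have "2 powr (- c) < 1" using c by (simp add: powr_less_one)
      then show ?thesis by (intro divide_nonneg_nonneg) auto
    qed
    ultimately show ?thesis
      by (subst ennreal_mult[symmetric]) (auto simp: \<delta>_def)
  qed
  finally show ?thesis .
qed

lemma cmod_cis_minus_one: "cmod (cis b - 1) = 2 * \<bar>sin (b/2)\<bar>"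
proof -
  have "(cmod (cis b - 1))^2 = (cos b - 1)^2 + (sin b)^2"
    by (simp add: cmod_power2)
  also have "\<dots> = 2 - 2 * cos b"
    by (simp add: power2_diff)
  also have "cos b = 1 - 2 * (sin (b/2))^2"
    using cos_double_sin[of "b/2"] by simp
  finally have "(cmod (cis b - 1))^2 = (2 * \<bar>sin (b/2)\<bar>)^2"
    by (simp only: power_mult_distrib power2_abs) simp
  then show ?thesis
    using power2_eq_iff_nonneg[of "cmod (cis b - 1)" "2 * \<bar>sin (b/2)\<bar>"] by simp
qed

lemma cmod_cis_diff: "cmod (cis a - cis b) = 2 * \<bar>sin ((a - b)/2)\<bar>"
proof -
  have "cis a - cis b = cis b * (cis (a - b) - 1)"
    by (simp add: algebra_simps cis_mult)
  then have "cmod (cis a - cis b) = cmod (cis (a - b) - 1)"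
    by (simp add: norm_mult)
  then show ?thesis by (simp add: cmod_cis_minus_one)
qed

lemma cmod_cis_diff_le: "cmod (cis a - cis b) \<le> \<bar>a - b\<bar>"
  using abs_sin_x_le_abs_x[of "(a-b)/2"] by (simp add: cmod_cis_diff)

lemma sin_ge_third:
  fixes y :: real assumes y: "0 \<le> y" "y \<le> pi/2"
  shows "y / 3 \<le> sin y"
proof (cases "y \<le> pi/3")
  case True
  show ?thesis
  proof (cases "y = 0")
    case False
    then have ypos: "0 < y" using y by simp
    obtain \<xi> where \<xi>: "0 < \<xi>" "\<xi> < y" "sin y - sin 0 = (y - 0) * cos \<xi>"
      using MVT2[OF ypos, of sin cos] by (auto intro: DERIV_sin)
    have "cos (pi/3) \<le> cos \<xi>"
      using \<xi> True by (intro cos_monotone_0_pi_le) auto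
    then have "1/2 \<le> cos \<xi>" by (simp add: cos_60)
    then have "y * (1/2) \<le> y * cos \<xi>" using ypos by (intro mult_left_mono) auto
    then show ?thesis using \<xi> ypos by simp
  qed simp
next
  case False
  have "sin (pi/3) \<le> sin y"
    using False y by (intro sin_monotone_2pi_le) auto
  then have "sqrt 3 / 2 \<le> sin y" by (simp add: sin_60)
  moreover have "4/3 \<le> sqrt 3"
    by (rule real_le_rsqrt) (simp add: power2_eq_square)
  moreover have "y \<le> 2" using y pi_less_4 by simp
  ultimately show ?thesis by simp
qed

lemma angle_le_chord:
  assumes "\<bar>b\<bar> \<le> pi"
  shows "\<bar>b\<bar> \<le> 3 * cmod (cis b - 1)"
proof -
  have "\<bar>b\<bar>/2 / 3 \<le> sin (\<bar>b\<bar>/2)"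
    using assms by (intro sin_ge_third) auto
  moreover have "sin (\<bar>b\<bar>/2) = \<bar>sin (b/2)\<bar>"
  proof (cases "b \<ge> 0")
    case True
    then have "sin (b/2) \<ge> 0" using assms by (intro sin_ge_zero) auto
    then show ?thesis using True by simp
  next
    case False
    then have "sin (-b/2) \<ge> 0" using assms by (intro sin_ge_zero) auto
    then show ?thesis using False by simp
  qed
  ultimately show ?thesis by (simp add: cmod_cis_minus_one)
qed

lemma cmod_of_real_minus_one: "cmod (complex_of_real r - 1) = \<bar>r - 1\<bar>"
  by (metis norm_of_real of_real_1 of_real_diff)

lemma box_props:
  assumes l: "0 < l" "l \<le> 1" and z: "z \<in> carleson_box \<theta> l"
  shows "cmod z < 1" "1 - cmod z \<le> l" "cmod (z - cis (\<theta> + pi * l)) \<le> 5 * l"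
proof -
  obtain r \<phi> where z: "z = complex_of_real r * cis \<phi>" and \<phi>: "\<theta> \<le> \<phi>" "\<phi> \<le> \<theta> + 2 * pi * l"
    and r: "1 - l \<le> r" "r < 1"
    using z unfolding carleson_box_def arc_def by blast
  have r0: "r \<ge> 0" using r l by simp
  have cz: "cmod z = r" using r0 by (simp add: z norm_mult)
  show "cmod z < 1" "1 - cmod z \<le> l" using cz r by auto
  have "cmod (z - cis \<phi>) = cmod ((complex_of_real r - 1) * cis \<phi>)" by (simp add: z algebra_simps)
  also have "\<dots> = 1 - r" using r by (simp add: norm_mult cmod_of_real_minus_one)
  finally have a: "cmod (z - cis \<phi>) \<le> l" using r by simp
  have b: "cmod (cis \<phi> - cis (\<theta> + pi * l)) \<le> pi * l"
    using cmod_cis_diff_le[of \<phi> "\<theta> + pi * l"] \<phi> by (simp add: abs_le_iff)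
  have "cmod (z - cis (\<theta> + pi * l)) \<le> cmod (z - cis \<phi>) + cmod (cis \<phi> - cis (\<theta> + pi * l))"
    using norm_triangle_ineq[of "z - cis \<phi>" "cis \<phi> - cis (\<theta> + pi * l)"] by simp
  also have "\<dots> \<le> l + pi * l" using a b by simp
  also have "\<dots> \<le> 5 * l" using pi_less_4 l by simp
  finally show "cmod (z - cis (\<theta> + pi * l)) \<le> 5 * l" .
qed

lemma box_sets[measurable]:
  assumes l: "0 < l" "l \<le> 1"
  shows "carleson_box \<theta> l \<in> sets borel"
proof -
  define g where "g = (\<lambda>(r::real, \<phi>::real). complex_of_real r * cis \<phi>)"
  have cg: "continuous_on UNIV g" unfolding g_def
    by (auto intro!: continuous_intros simp: case_prod_unfold cis_conv_exp)
  have eq: "carleson_box \<theta> l = (\<Union>n. g ` ({1 - l .. 1 - 1 / Suc n} \<times> {\<theta> .. \<theta> + 2 * pi * l}))"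
  proof (intro equalityI subsetI)
    fix z assume "z \<in> carleson_box \<theta> l"
    then obtain r \<phi> where z: "z = complex_of_real r * cis \<phi>" and \<phi>: "\<theta> \<le> \<phi>" "\<phi> \<le> \<theta> + 2 * pi * l"
      and r: "1 - l \<le> r" "r < 1"
      unfolding carleson_box_def arc_def by blast
    obtain n where n: "1 / Suc n < 1 - r" using r(2) by (metis diff_gt_0_iff_gt nat_approx_posE)
    show "z \<in> (\<Union>n. g ` ({1 - l .. 1 - 1 / Suc n} \<times> {\<theta> .. \<theta> + 2 * pi * l}))"
    proof -
      have "z \<in> g ` ({1 - l .. 1 - 1 / Suc n} \<times> {\<theta> .. \<theta> + 2 * pi * l})"
        by (rule image_eqI[of _ _ "(r, \<phi>)"]) (use n r \<phi> in \<open>auto simp: z g_def\<close>)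
      then show ?thesis by blast
    qed
  next
    fix z assume "z \<in> (\<Union>n. g ` ({1 - l .. 1 - 1 / Suc n} \<times> {\<theta> .. \<theta> + 2 * pi * l}))"
    then obtain n where "z \<in> g ` ({1 - l .. 1 - 1 / Suc n} \<times> {\<theta> .. \<theta> + 2 * pi * l})" by blast
    then obtain r \<phi> where z: "z = complex_of_real r * cis \<phi>" and \<phi>: "\<theta> \<le> \<phi>" "\<phi> \<le> \<theta> + 2 * pi * l"
      and r: "1 - l \<le> r" "r \<le> 1 - 1 / Suc n" by (auto simp: g_def)
    have "r < 1" using r(2) by (smt (verit) of_nat_0_less_iff zero_less_Suc divide_pos_pos)
    then show "z \<in> carleson_box \<theta> l" unfolding carleson_box_def arc_def using r \<phi> z by blast
  qed
  have "g ` ({1 - l .. 1 - 1 / Suc n} \<times> {\<theta> .. \<theta> + 2 * pi * l}) \<in> sets borel" for n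
    by (intro borel_closed compact_imp_closed compact_continuous_image continuous_on_subset[OF cg]
        compact_Times compact_Icc) auto
  then show ?thesis unfolding eq by auto
qed

lemma ball_in_box:
  assumes r: "r > 0"
  shows "ball (cis \<theta>c) r \<inter> ball 0 1 \<subseteq> carleson_box (\<theta>c - pi * min 1 (2 * r)) (min 1 (2 * r))"
proof
  fix w assume w: "w \<in> ball (cis \<theta>c) r \<inter> ball 0 1"
  define l' where "l' = min 1 (2 * r)"
  define u where "u = w * cis (- \<theta>c)"
  define \<beta> where "\<beta> = Arg u"
  define \<rho> where "\<rho> = cmod w"
  have cu: "cmod u = \<rho>" by (simp add: u_def norm_mult \<rho>_def)
  have u_eq: "u = complex_of_real \<rho> * cis \<beta>"
    using rcis_cmod_Arg[of u] by (simp add: rcis_def cu \<beta>_def)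
  have w_eq: "w = complex_of_real \<rho> * cis (\<beta> + \<theta>c)"
  proof -
    have "w = u * cis \<theta>c" by (simp add: u_def mult.assoc cis_mult)
    then show ?thesis by (simp add: u_eq mult.assoc cis_mult)
  qed
  have wr: "cmod (cis \<theta>c - w) < r" using w by (simp add: dist_norm)
  have \<rho>1: "\<rho> < 1" using w by (simp add: \<rho>_def)
  have \<rho>r: "1 - \<rho> < r"
    using norm_triangle_ineq2[of "cis \<theta>c" w] wr by (simp add: \<rho>_def)
  have "\<bar>\<beta>\<bar> \<le> pi * l'"
  proof (cases "l' = 1")
    case True
    then show ?thesis using Arg_bounded[of u] by (simp add: \<beta>_def abs_le_iff)
  next
    case False
    then have l': "l' = 2 * r" by (simp add: l'_def min_def split: if_splits)
    have "cmod (u - 1) = cmod ((w - cis \<theta>c) * cis (- \<theta>c))"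
      by (simp add: u_def algebra_simps cis_mult)
    also have "\<dots> < r" using wr by (simp add: norm_mult norm_minus_commute)
    finally have a: "cmod (u - 1) < r" .
    have "cmod (cis \<beta> - u) = cmod ((1 - complex_of_real \<rho>) * cis \<beta>)"
      by (simp add: u_eq algebra_simps)
    also have "\<dots> = 1 - \<rho>" using \<rho>1
      by (simp add: norm_mult norm_minus_commute[of 1] cmod_of_real_minus_one)
    finally have b: "cmod (cis \<beta> - u) < r" using \<rho>r by simp
    have "cmod (cis \<beta> - 1) < 2 * r"
      using norm_triangle_ineq[of "cis \<beta> - u" "u - 1"] a b by simp
    moreover have "\<bar>\<beta>\<bar> \<le> 3 * cmod (cis \<beta> - 1)"
      using Arg_bounded[of u] by (intro angle_le_chord) (simp add: \<beta>_def abs_le_iff)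
    ultimately have "\<bar>\<beta>\<bar> \<le> 6 * r" by simp
    also have "\<dots> \<le> pi * l'" using pi_gt3 r l' by simp
    finally show ?thesis .
  qed
  moreover have "1 - l' \<le> \<rho>" using \<rho>r \<rho>1 r by (simp add: l'_def \<rho>_def min_def)
  ultimately show "w \<in> carleson_box (\<theta>c - pi * min 1 (2 * r)) (min 1 (2 * r))"
  proof -
    have "cis (\<beta> + \<theta>c) \<in> {cis \<phi> | \<phi>. \<theta>c - pi * l' \<le> \<phi> \<and> \<phi> \<le> \<theta>c - pi * l' + 2 * pi * l'}"
      using \<open>\<bar>\<beta>\<bar> \<le> pi * l'\<close> by (intro CollectI exI[of _ "\<beta> + \<theta>c"]) (simp add: abs_le_iff)
    then show ?thesis using \<open>1 - l' \<le> \<rho>\<close> \<rho>1 w_eq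
      unfolding carleson_box_def arc_def l'_def[symmetric] by blast
  qed
qed

lemma phiK_ge:
  assumes "0 < t" "t \<le> 1"
  shows "ennreal (K (t * x) / K t) \<le> phiK K x"
  unfolding phiK_def using assms by (intro SUP_upper) auto

lemma phiK_mono:
  assumes sK: "standing_K K" and xy: "0 \<le> x" "x \<le> y"
  shows "phiK K x \<le> phiK K y"
  unfolding phiK_def
proof (intro SUP_mono bexI)
  fix t assume t: "t \<in> {0<..1::real}"
  have mono: "mono_on {0..} K" and Kp: "K t > 0" using sK t by (auto simp: standing_K_def)
  have "K (t * x) \<le> K (t * y)"
    using t xy by (intro mono_onD[OF mono]) (auto intro: mult_left_mono)
  then show "ennreal (K (t * x) / K t) \<le> ennreal (K (t * y) / K t)"
    using Kp by (intro ennreal_leI divide_right_mono) auto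
qed (use xy in auto)

lemma K_scale:
  assumes sK: "standing_K K" and cB: "condB K \<sigma>" and \<sigma>: "\<sigma> > 0"
  obtains CK where "CK \<ge> 0" "\<And>x t. 1 \<le> x \<Longrightarrow> 0 < t \<Longrightarrow> t \<le> 1 \<Longrightarrow> K (t * x) \<le> CK * x powr \<sigma> * K t"
proof -
  define M where "M = (\<integral>\<^sup>+ x. indicator {1..} x * phiK K x * ennreal (1 / x powr (1 + \<sigma>)) \<partial>lborel)"
  have Mfin: "M < \<infinity>" using cB unfolding condB_def M_def by simp
  define M' where "M' = enn2real M"
  have MM': "M = ennreal M'" using Mfin by (simp add: M'_def less_top)
  have M'0: "M' \<ge> 0" by (simp add: M'_def)
  define CK where "CK = M' * 2 powr (1 + \<sigma>)"
  show ?thesis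
  proof (rule that[of CK])
    show "CK \<ge> 0" using M'0 by (simp add: CK_def)
    fix x t :: real assume x: "1 \<le> x" and t: "0 < t" "t \<le> 1"
    have Kt: "K t > 0" using sK t by (auto simp: standing_K_def)
    have Ktx: "K (t * x) \<ge> 0" using sK t x by (auto simp: standing_K_def)
    define c where "c = x / (2 * x) powr (1 + \<sigma>)"
    have c0: "c > 0" using x by (simp add: c_def)
    have "ennreal (K (t * x) / K t) * ennreal c \<le> phiK K x * ennreal c"
      by (intro mult_right_mono phiK_ge t) auto
    also have "\<dots> = (\<integral>\<^sup>+ y. phiK K x * ennreal (1 / (2 * x) powr (1 + \<sigma>)) * indicator {x..2*x} y \<partial>lborel)"
      using x by (subst nn_integral_cmult_indicator) (auto simp: c_def ennreal_mult[symmetric] mult.assoc)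
    also have "\<dots> \<le> M" unfolding M_def
    proof (intro nn_integral_mono)
      fix y
      show "phiK K x * ennreal (1 / (2 * x) powr (1 + \<sigma>)) * indicator {x..2*x} y \<le> indicator {1..} y * phiK K y * ennreal (1 / y powr (1 + \<sigma>))"
      proof (cases "y \<in> {x..2*x}")
        case True
        have "phiK K x \<le> phiK K y" using True x by (intro phiK_mono[OF sK]) auto
        moreover have "ennreal (1 / (2 * x) powr (1 + \<sigma>)) \<le> ennreal (1 / y powr (1 + \<sigma>))"
          using True x \<sigma> by (intro ennreal_leI divide_left_mono powr_mono2) auto
        ultimately show ?thesis using True x by (auto intro: mult_mono)
      qed simp
    qed
    finally have "ennreal (K (t * x) / K t) * ennreal c \<le> ennreal M'" by (simp add: MM')
    moreover have "ennreal (K (t * x) / K t) * ennreal c = ennreal (K (t * x) / K t * c)"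
      using Kt Ktx c0 by (intro ennreal_mult[symmetric]) auto
    ultimately have "ennreal (K (t * x) / K t * c) \<le> ennreal M'" by simp
    then have "K (t * x) / K t * c \<le> M'" using M'0 by (simp add: ennreal_le_iff)
    then have "K (t * x) \<le> M' / c * K t" using Kt c0 by (simp add: field_simps)
    also have "M' / c = CK * x powr \<sigma>"
    proof -
      have "(2 * x) powr (1 + \<sigma>) = 2 powr (1 + \<sigma>) * x * x powr \<sigma>"
        using x by (simp add: powr_mult powr_add)
      then show ?thesis using x by (simp add: c_def CK_def field_simps)
    qed
    finally show "K (t * x) \<le> CK * x powr \<sigma> * K t" .
  qed
qed

lemma ennreal_mult_plus: "0 \<le> c \<Longrightarrow> 0 \<le> a \<Longrightarrow> 0 \<le> b \<Longrightarrow> ennreal (c * (a + b)) = ennreal c * (ennreal a + ennreal b)"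
  by (metis add_nonneg_nonneg ennreal_mult ennreal_plus)

lemma ennreal_plus_mult2: "0 \<le> a \<Longrightarrow> 0 \<le> b \<Longrightarrow> 0 \<le> c \<Longrightarrow> 0 \<le> d \<Longrightarrow> ennreal (a * b + c * d) = ennreal a * ennreal b + ennreal c * ennreal d"
  by (metis mult_nonneg_nonneg ennreal_mult ennreal_plus)

lemma young_pointwise:
  fixes k G X Y p :: real
  assumes p: "p > 1" and k: "k \<ge> 0" and G: "G \<ge> 0" and X: "X > 0" and Y: "Y > 0"
  shows "k * G \<le> Y powr (1 - 1/p) * X powr (1/p) * (k * G powr p / X / p + k / Y * (1 - 1/p))"
proof (cases "k = 0 \<or> G = 0")
  case True
  then show ?thesis using k G X Y p by auto
next
  case False
  then have kp: "k > 0" and Gp: "G > 0" using k G by auto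
  have p1: "1/p > 0" "1 - 1/p > 0" using p by auto
  have "(k * G powr p / X) powr (1/p) * (k / Y) powr (1 - 1/p) \<le> (1/p) * (k * G powr p / X) + (1 - 1/p) * (k / Y)"
    using p1 kp Gp X Y by (intro Youngs_inequality_0) auto
  moreover have "(k * G powr p / X) powr (1/p) * (k / Y) powr (1 - 1/p) = k * G / (Y powr (1 - 1/p) * X powr (1/p))"
  proof -
    have "(k * G powr p / X) powr (1/p) = k powr (1/p) * G / X powr (1/p)"
      using kp Gp X p by (simp add: powr_mult powr_divide powr_powr)
    moreover have "(k / Y) powr (1 - 1/p) = k powr (1 - 1/p) / Y powr (1 - 1/p)"
      using kp Y by (simp add: powr_divide)
    moreover have "k powr (1/p) * k powr (1 - 1/p) = k"
      using kp by (simp add: powr_add[symmetric])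
    ultimately show ?thesis by (simp add: field_simps)
  qed
  ultimately have "k * G / (Y powr (1 - 1/p) * X powr (1/p)) \<le> (1/p) * (k * G powr p / X) + (1 - 1/p) * (k / Y)"
    by simp
  then show ?thesis using X Y
    by (simp add: divide_le_eq mult.commute mult.left_commute)
qed

lemma holder_nn:
  fixes k G :: "'a \<Rightarrow> real"
  assumes p: "p > 1" and km[measurable]: "k \<in> borel_measurable M" and Gm[measurable]: "G \<in> borel_measurable M"
    and k0: "\<And>x. k x \<ge> 0" and G0: "\<And>x. G x \<ge> 0"
    and Y: "(\<integral>\<^sup>+x. ennreal (k x) \<partial>M) = ennreal Y" and X: "(\<integral>\<^sup>+x. ennreal (k x * G x powr p) \<partial>M) = ennreal X"
    and Y0: "Y \<ge> 0" and X0: "X \<ge> 0"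
  shows "(\<integral>\<^sup>+x. ennreal (k x * G x) \<partial>M) \<le> ennreal (Y powr (1 - 1/p) * X powr (1/p))"
proof (cases "Y = 0 \<or> X = 0")
  case True
  have "AE x in M. k x * G x = 0"
  proof (cases "Y = 0")
    case True
    then have "AE x in M. ennreal (k x) = 0" using Y by (subst nn_integral_0_iff_AE[symmetric]) auto
    then show ?thesis by eventually_elim (use k0 in auto)
  next
    case False
    then have "X = 0" using \<open>Y = 0 \<or> X = 0\<close> by simp
    then have "AE x in M. ennreal (k x * G x powr p) = 0" using X by (subst nn_integral_0_iff_AE[symmetric]) auto
    then show ?thesis
    proof eventually_elim
      case (elim x)
      have nn: "k x * G x powr p \<ge> 0" using k0[of x] G0[of x] by simp
      have "k x * G x powr p = 0" using elim nn by simp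
      then show ?case using G0[of x] by auto
    qed
  qed
  then have "(\<integral>\<^sup>+x. ennreal (k x * G x) \<partial>M) = (\<integral>\<^sup>+x. 0 \<partial>M)"
    by (intro nn_integral_cong_AE) auto
  then show ?thesis by simp
next
  case False
  then have Yp: "Y > 0" and Xp: "X > 0" using X0 Y0 by auto
  define C where "C = Y powr (1 - 1/p) * X powr (1/p)"
  have C0: "C \<ge> 0" by (simp add: C_def)
  have "(\<integral>\<^sup>+x. ennreal (k x * G x) \<partial>M) \<le>
      (\<integral>\<^sup>+x. ennreal C * (ennreal (1 / X / p) * ennreal (k x * G x powr p) + ennreal ((1 - 1/p) / Y) * ennreal (k x)) \<partial>M)"
  proof (intro nn_integral_mono)
    fix x
    have "k x * G x \<le> C * (k x * G x powr p / X / p + k x / Y * (1 - 1/p))"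
      unfolding C_def using young_pointwise[OF p k0 G0 Xp Yp] .
    also have "\<dots> = C * (1 / X / p * (k x * G x powr p) + (1 - 1/p) / Y * k x)"
      by (simp add: field_simps)
    finally have "ennreal (k x * G x) \<le> ennreal (C * (1 / X / p * (k x * G x powr p) + (1 - 1/p) / Y * k x))"
      by (rule ennreal_leI)
    also have "\<dots> = ennreal C * (ennreal (1 / X / p) * ennreal (k x * G x powr p) + ennreal ((1 - 1/p) / Y) * ennreal (k x))"
    proof -
      have a0: "1 / X / p \<ge> 0" "k x * G x powr p \<ge> 0" "(1 - 1/p) / Y \<ge> 0" "k x \<ge> 0"
        using Xp Yp p k0[of x] G0[of x] by auto
      have "ennreal (C * (1 / X / p * (k x * G x powr p) + (1 - 1/p) / Y * k x))
          = ennreal C * (ennreal (1 / X / p * (k x * G x powr p)) + ennreal ((1 - 1/p) / Y * k x))"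
        by (rule ennreal_mult_plus[OF C0 mult_nonneg_nonneg[OF a0(1,2)] mult_nonneg_nonneg[OF a0(3,4)]])
      also have "\<dots> = ennreal C * (ennreal (1 / X / p) * ennreal (k x * G x powr p) + ennreal ((1 - 1/p) / Y) * ennreal (k x))"
        using a0 by (simp only: ennreal_mult)
      finally show ?thesis .
    qed
    finally show "ennreal (k x * G x) \<le> ennreal C * (ennreal (1 / X / p) * ennreal (k x * G x powr p) + ennreal ((1 - 1/p) / Y) * ennreal (k x))" .
  qed
  also have "\<dots> = ennreal C * (ennreal (1 / X / p) * ennreal X + ennreal ((1 - 1/p) / Y) * ennreal Y)"
    by (simp add: nn_integral_cmult nn_integral_add X Y)
  also have "\<dots> = ennreal C"
  proof -
    have "ennreal (1 / X / p) * ennreal X + ennreal ((1 - 1/p) / Y) * ennreal Y = ennreal (1 / X / p * X + (1 - 1/p) / Y * Y)"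
      using Xp Yp p by (intro ennreal_plus_mult2[symmetric]) auto
    also have "1 / X / p * X + (1 - 1/p) / Y * Y = 1" using Xp Yp p by (simp add: field_simps)
    finally show ?thesis by simp
  qed
  finally show ?thesis by (simp add: C_def)
qed

definition Dd :: "complex \<Rightarrow> real" where "Dd z = 1 - (cmod z)^2"

lemma Dd_meas[measurable]: "Dd \<in> borel_measurable borel"
  unfolding Dd_def by measurable

lemma Dd_bounds: "cmod z \<le> 1 \<Longrightarrow> 0 \<le> Dd z \<and> Dd z \<le> 2 * (1 - cmod z)"
  unfolding Dd_def using one_minus_sq_le[of z] by (auto simp: power_le_one abs_square_le_1)

lemma Dd_pos: "cmod z < 1 \<Longrightarrow> 0 < Dd z"
  unfolding Dd_def by (simp add: power_less_one_iff abs_square_less_1)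

lemma L_pos: "cmod z < 1 \<Longrightarrow> cmod w \<le> 1 \<Longrightarrow> 0 < cmod (1 - cnj w * z)"
proof -
  assume z: "cmod z < 1" and w: "cmod w \<le> 1"
  have "1 - cmod z \<le> cmod (1 - cnj w * z)" by (rule geo2'[OF w])
  then show ?thesis using z by linarith
qed

lemma L_sym: "cmod (1 - cnj w * z) = cmod (1 - cnj z * w)"
proof -
  have "cnj (1 - cnj w * z) = 1 - cnj z * w" by (simp add: mult.commute)
  then show ?thesis by (metis complex_mod_cnj)
qed

lemma emeasure_density_le:
  "emeasure (density M g) B \<le> (\<integral>\<^sup>+x. g x * indicator B x \<partial>M)"
  unfolding density_def emeasure_measure_of_conv by auto

definition CJ :: "real \<Rightarrow> real \<Rightarrow> real" where
  "CJ a c = max (2 powr a * 2 powr c * CF c) (2 powr a * 2 powr c * 2 powr (2 + a + c) * 144 / pi)"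

lemma J_bound:
  assumes a: "a > 0" and c: "c > 0" and l: "0 < l" "l \<le> 1" and w: "cmod w < 1"
  shows "(\<integral>\<^sup>+ z. indicator (carleson_box \<theta> l) z * ennreal (Dd z powr a * Dd w powr c / cmod (1 - cnj w * z) powr (2 + a + c)) \<partial>dA)
     \<le> ennreal (CJ a c * min 1 ((10 * l / cmod (w - cis (\<theta> + pi * l))) powr (2 + a)))"
proof -
  define \<zeta> where "\<zeta> = cis (\<theta> + pi * l)"
  define R where "R = cmod (w - \<zeta>)"
  have R1: "1 - cmod w \<le> R" using norm_triangle_ineq2[of \<zeta> w] by (simp add: R_def \<zeta>_def norm_minus_commute)
  then have Rp: "R > 0" using w by simp
  have Dw: "0 \<le> Dd w" "Dd w \<le> 2 * (1 - cmod w)" using Dd_bounds[of w] w by auto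
  have box_ball: "cmod z < 1" if "z \<in> carleson_box \<theta> l" for z using box_props[OF l that] by simp
  define F where "F z = indicator (carleson_box \<theta> l) z * ennreal (Dd z powr a * Dd w powr c / cmod (1 - cnj w * z) powr (2 + a + c))" for z
  have main: "(\<integral>\<^sup>+ z. F z \<partial>dA) \<le> ennreal (CJ a c * min 1 ((10 * l / R) powr (2 + a)))"
  proof (cases "R < 10 * l")
    case True
    have "1 \<le> (10 * l / R) powr (2 + a)"
      using True Rp a by (intro ge_one_powr_ge_zero) auto
    then have min1: "min 1 ((10 * l / R) powr (2 + a)) = 1" by simp
    have "(\<integral>\<^sup>+ z. F z \<partial>dA) \<le> (\<integral>\<^sup>+ z. ennreal (2 powr a * Dd w powr c) * ennreal (1 / cmod (1 - cnj z * w) powr (2 + c)) \<partial>dA)"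
    proof (intro nn_integral_mono)
      fix z
      show "F z \<le> ennreal (2 powr a * Dd w powr c) * ennreal (1 / cmod (1 - cnj z * w) powr (2 + c))"
      proof (cases "z \<in> carleson_box \<theta> l")
        case True
        then have z: "cmod z < 1" by (rule box_ball)
        define L where "L = cmod (1 - cnj w * z)"
        have Lp: "L > 0" using L_pos[OF z, of w] w by (simp add: L_def)
        have Dz: "0 \<le> Dd z" "Dd z \<le> 2 * L"
          using Dd_bounds[of z] z geo2'[of w z] w by (auto simp: L_def)
        have "Dd z powr a * Dd w powr c / L powr (2 + a + c) \<le> (2 * L) powr a * Dd w powr c / L powr (2 + a + c)"
          using Dz Lp a by (intro divide_right_mono mult_right_mono powr_mono2) auto
        also have "\<dots> = 2 powr a * Dd w powr c * (1 / L powr (2 + c))"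
          using Lp by (simp add: powr_mult powr_add field_simps)
        finally have "Dd z powr a * Dd w powr c / L powr (2 + a + c) \<le> 2 powr a * Dd w powr c * (1 / L powr (2 + c))" .
        moreover have "cmod (1 - cnj z * w) = L" using L_sym[of w z] by (simp add: L_def)
        ultimately show ?thesis using True Lp
          by (simp add: F_def L_def[symmetric] ennreal_mult[symmetric])
      qed (simp add: F_def)
    qed
    also have "\<dots> = ennreal (2 powr a * Dd w powr c) * (\<integral>\<^sup>+ z. ennreal (1 / cmod (1 - cnj z * w) powr (2 + c)) \<partial>dA)"
      by (rule nn_integral_cmult) measurable
    also have "\<dots> \<le> ennreal (2 powr a * Dd w powr c) * ennreal (CF c * (1 - cmod w) powr (-c))"
      by (intro mult_left_mono FR c w) auto
    also have "\<dots> = ennreal (2 powr a * CF c * (Dd w powr c * (1 - cmod w) powr (-c)))"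
      using CF_pos[OF c] by (simp add: ennreal_mult[symmetric] mult_ac)
    also have "\<dots> \<le> ennreal (2 powr a * CF c * 2 powr c)"
    proof (intro ennreal_leI mult_left_mono)
      have "Dd w powr c \<le> (2 * (1 - cmod w)) powr c" using Dw c by (intro powr_mono2) auto
      also have "\<dots> = 2 powr c * (1 - cmod w) powr c" using w by (subst powr_mult) auto
      finally have "Dd w powr c * (1 - cmod w) powr (-c) \<le> 2 powr c * (1 - cmod w) powr c * (1 - cmod w) powr (-c)"
        by (intro mult_right_mono) auto
      also have "\<dots> = 2 powr c" using w by (simp add: powr_minus field_simps)
      finally show "Dd w powr c * (1 - cmod w) powr (-c) \<le> 2 powr c" .
    qed (use CF_pos[OF c] in auto)
    also have "\<dots> \<le> ennreal (CJ a c * min 1 ((10 * l / R) powr (2 + a)))"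
      unfolding min1 CJ_def by (intro ennreal_leI) (simp add: mult_ac)
    finally show ?thesis .
  next
    case False
    then have R10: "10 * l \<le> R" by simp
    define K2 where "K2 = (2 * l) powr a * (2 * R) powr c / (R / 2) powr (2 + a + c)"
    have "(\<integral>\<^sup>+ z. F z \<partial>dA) \<le> (\<integral>\<^sup>+ z. ennreal K2 * indicator (ball \<zeta> (6 * l)) z \<partial>dA)"
    proof (intro nn_integral_mono)
      fix z
      show "F z \<le> ennreal K2 * indicator (ball \<zeta> (6 * l)) z"
      proof (cases "z \<in> carleson_box \<theta> l")
        case True
        note bp = box_props[OF l True]
        have z: "cmod z < 1" using bp by simp
        have z5: "cmod (z - \<zeta>) \<le> 5 * l" using bp by (simp add: \<zeta>_def)
        define L where "L = cmod (1 - cnj w * z)"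
        have Lp: "L > 0" using L_pos[OF z, of w] w by (simp add: L_def)
        have "R \<le> cmod (z - w) + cmod (z - \<zeta>)"
          using norm_triangle_ineq[of "w - z" "z - \<zeta>"] by (simp add: R_def norm_minus_commute)
        then have "R \<le> L + 5 * l" using geo1[of z w] z w z5 by (simp add: L_def)
        then have LR: "R / 2 \<le> L" using R10 by simp
        have Dz: "0 \<le> Dd z" "Dd z \<le> 2 * l" using Dd_bounds[of z] z bp by auto
        have Dw2: "Dd w \<le> 2 * R" using Dw R1 by simp
        have "Dd z powr a * Dd w powr c / L powr (2 + a + c) \<le> (2 * l) powr a * (2 * R) powr c / (R / 2) powr (2 + a + c)"
          using Dz Dw Dw2 LR Lp Rp a c
          by (intro frac_le mult_mono powr_mono2 mult_nonneg_nonneg) auto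
        moreover have "z \<in> ball \<zeta> (6 * l)" using z5 l by (simp add: dist_norm norm_minus_commute)
        ultimately show ?thesis using True
          by (simp add: F_def L_def[symmetric] K2_def)
      qed (simp add: F_def)
    qed
    also have "\<dots> = ennreal K2 * emeasure dA (ball \<zeta> (6 * l))"
      by (rule nn_integral_cmult_indicator) simp
    also have "\<dots> \<le> ennreal K2 * ennreal (4 / pi * (6 * l)^2)"
      using l by (intro mult_left_mono emeasure_dA_ball_le) auto
    also have "\<dots> = ennreal (K2 * (144 / pi * l^2))"
      using Rp l by (simp add: K2_def ennreal_mult[symmetric] power2_eq_square)
    also have "\<dots> \<le> ennreal (CJ a c * min 1 ((10 * l / R) powr (2 + a)))"
    proof (intro ennreal_leI)
      have le1: "(10 * l / R) powr (2 + a) \<le> 1"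
        using R10 Rp l a by (intro powr_le1) auto
      have "K2 * (144 / pi * l^2) = 2 powr a * 2 powr c * 2 powr (2 + a + c) * 144 / pi * (l / R) powr (2 + a)"
      proof -
        have e1: "K2 = 2 powr a * 2 powr c * 2 powr (2 + a + c) * (l powr a * R powr c / R powr (2 + a + c))"
          using l Rp by (simp add: K2_def powr_mult powr_divide field_simps)
        have e2: "l powr a * R powr c / R powr (2 + a + c) * l^2 = (l / R) powr (2 + a)"
          using l Rp by (simp add: powr_divide powr_add powr_realpow[symmetric] field_simps power2_eq_square)
        have "K2 * (144 / pi * l^2) = (2 powr a * 2 powr c * 2 powr (2 + a + c) * 144 / pi) * (l powr a * R powr c / R powr (2 + a + c) * l^2)"
          unfolding e1 by (simp add: divide_inverse mult_ac)
        also have "\<dots> = 2 powr a * 2 powr c * 2 powr (2 + a + c) * 144 / pi * (l / R) powr (2 + a)"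
          unfolding e2 ..
        finally show ?thesis .
      qed
      also have "\<dots> \<le> 2 powr a * 2 powr c * 2 powr (2 + a + c) * 144 / pi * (10 * l / R) powr (2 + a)"
        using l Rp a by (intro mult_left_mono powr_mono2) (auto simp: divide_right_mono)
      also have "\<dots> \<le> CJ a c * min 1 ((10 * l / R) powr (2 + a))"
        unfolding CJ_def min_absorb2[OF le1] by (intro mult_right_mono max.cobounded2) auto
      finally show "K2 * (144 / pi * l^2) \<le> CJ a c * min 1 ((10 * l / R) powr (2 + a))" .
    qed
    finally show ?thesis .
  qed
  then show ?thesis by (simp add: F_def R_def \<zeta>_def)
qed

lemma norm_integral_le_nn:
  fixes g :: "'a \<Rightarrow> 'b::{banach, second_countable_topology}"
  shows "ennreal (norm (integral\<^sup>L M g)) \<le> (\<integral>\<^sup>+ x. ennreal (norm (g x)) \<partial>M)"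
proof (cases "integrable M g")
  case True
  then show ?thesis using integral_norm_bound_ennreal[OF True] by simp
next
  case False
  then show ?thesis by (simp add: not_integrable_integral_eq)
qed

definition kk :: "real \<Rightarrow> real \<Rightarrow> complex \<Rightarrow> complex \<Rightarrow> real" where
  "kk c e z w = indicator (ball 0 1) w * Dd w powr c / cmod (1 - cnj w * z) powr e"

lemma kk_meas2[measurable]: "(\<lambda>x. kk c e (fst x) (snd x)) \<in> borel_measurable (dA \<Otimes>\<^sub>M dA)"
  unfolding kk_def by measurable

lemma kk_meas_w[measurable]: "(\<lambda>w. kk c e z w) \<in> borel_measurable borel"
  unfolding kk_def by measurable

lemma kk_meas_z[measurable]: "(\<lambda>z. kk c e z w) \<in> borel_measurable borel"
  unfolding kk_def by measurable

lemma kk_nonneg: "kk c e z w \<ge> 0"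
  unfolding kk_def by (simp add: indicator_def)

lemma kk_le:
  assumes z: "cmod z < 1" and c: "c \<ge> 0"
  shows "kk c (2 + a + c) z w \<le> 2 powr c / cmod (1 - cnj w * z) powr (2 + a)"
proof (cases "w \<in> ball 0 1")
  case True
  define L where "L = cmod (1 - cnj w * z)"
  have w: "cmod w < 1" using True by simp
  have Lp: "L > 0" using L_pos[OF z, of w] w by (simp add: L_def)
  have Dw: "0 \<le> Dd w" "Dd w \<le> 2 * L"
    using Dd_bounds[of w] w geo2[of z w] z by (auto simp: L_def)
  have "Dd w powr c / L powr (2 + a + c) \<le> (2 * L) powr c / L powr (2 + a + c)"
    using Dw c by (intro divide_right_mono powr_mono2) auto
  also have "\<dots> = 2 powr c / L powr (2 + a)"
    using Lp by (simp add: powr_mult powr_add field_simps)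
  finally show ?thesis using True by (simp add: kk_def L_def)
qed (simp add: kk_def)

definition C1 :: "real \<Rightarrow> real \<Rightarrow> real" where "C1 a c = 2 powr c * CF a * 2 powr a"

lemma Y_bound:
  assumes z: "cmod z < 1" and a: "a > 0" and c: "c \<ge> 0"
  shows "(\<integral>\<^sup>+ w. ennreal (kk c (2 + a + c) z w) \<partial>dA) \<le> ennreal (C1 a c * Dd z powr (-a))"
proof -
  have "(\<integral>\<^sup>+ w. ennreal (kk c (2 + a + c) z w) \<partial>dA) \<le> (\<integral>\<^sup>+ w. ennreal (2 powr c) * ennreal (1 / cmod (1 - cnj w * z) powr (2 + a)) \<partial>dA)"
    using kk_le[OF z c] by (intro nn_integral_mono) (simp add: ennreal_mult[symmetric])
  also have "\<dots> = ennreal (2 powr c) * (\<integral>\<^sup>+ w. ennreal (1 / cmod (1 - cnj w * z) powr (2 + a)) \<partial>dA)"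
    by (rule nn_integral_cmult) measurable
  also have "\<dots> \<le> ennreal (2 powr c) * ennreal (CF a * (1 - cmod z) powr (-a))"
    by (intro mult_left_mono FR a z) auto
  also have "\<dots> \<le> ennreal (2 powr c) * ennreal (CF a * (2 powr a * Dd z powr (-a)))"
  proof -
    have Dz: "0 < Dd z" "Dd z \<le> 2 * (1 - cmod z)" using Dd_pos[OF z] Dd_bounds[of z] z by auto
    have "(1 - cmod z) powr (-a) \<le> (Dd z / 2) powr (-a)"
      using Dz a by (intro powr_mono2') auto
    also have "\<dots> = 2 powr a * Dd z powr (-a)"
      using Dz by (simp add: powr_divide powr_minus field_simps)
    finally have "CF a * (1 - cmod z) powr (-a) \<le> CF a * (2 powr a * Dd z powr (-a))"
      using CF_pos[OF a] by (intro mult_left_mono) auto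
    then show ?thesis by (rule mult_left_mono[OF ennreal_leI]) auto
  qed
  also have "\<dots> = ennreal (C1 a c * Dd z powr (-a))"
    using CF_pos[OF a] by (simp add: C1_def ennreal_mult[symmetric] mult_ac)
  finally show ?thesis .
qed

lemma T_pointwise:
  fixes f :: "complex \<Rightarrow> complex"
  assumes p: "p > 1" and a: "a > 0" and c: "c > 0"
    and hab: "\<alpha> + b = 2 + a + c" and hc: "b - 1 = c + q / p" and he: "e - a * (p - 1) = a"
    and fm[measurable]: "f \<in> borel_measurable borel"
    and fin: "(\<integral>\<^sup>+w. ennreal (cmod (f w) powr p * Dd w powr q) \<partial>dA) < \<infinity>"
    and z: "cmod z < 1"
  shows "ennreal (cmod (T_op \<alpha> b f z) powr p * Dd z powr e)
    \<le> ennreal (C1 a c powr (p - 1)) * ennreal (Dd z powr a) * (\<integral>\<^sup>+w. ennreal (kk c (2 + a + c) z w * (cmod (f w) powr p * Dd w powr q)) \<partial>dA)"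
proof -
  define k where "k w = kk c (2 + a + c) z w" for w
  define G where "G w = cmod (f w) * Dd w powr (q / p)" for w
  have km[measurable]: "k \<in> borel_measurable dA" unfolding k_def by measurable
  have Gm[measurable]: "G \<in> borel_measurable dA" unfolding G_def by measurable
  have k0: "k w \<ge> 0" for w by (simp add: k_def kk_nonneg)
  have G0: "G w \<ge> 0" for w by (simp add: G_def)
  define X where "X = (\<integral>\<^sup>+w. ennreal (kk c (2 + a + c) z w * (cmod (f w) powr p * Dd w powr q)) \<partial>dA)"
  define Y where "Y = (\<integral>\<^sup>+w. ennreal (k w) \<partial>dA)"
  have Xeq: "X = (\<integral>\<^sup>+w. ennreal (k w * G w powr p) \<partial>dA)"
    unfolding X_def
  proof (intro nn_integral_cong)
    fix w
    show "ennreal (kk c (2 + a + c) z w * (cmod (f w) powr p * Dd w powr q)) = ennreal (k w * G w powr p)"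
    proof (cases "w \<in> ball 0 1")
      case True
      then have "Dd w > 0" by (intro Dd_pos) simp
      then have "G w powr p = cmod (f w) powr p * Dd w powr q"
        using p by (simp add: G_def powr_mult powr_powr)
      then show ?thesis by (simp add: k_def)
    qed (simp add: k_def kk_def)
  qed
  define \<delta> where "\<delta> = 1 - cmod z"
  have \<delta>: "\<delta> > 0" using z by (simp add: \<delta>_def)
  have "X \<le> (\<integral>\<^sup>+w. ennreal (2 powr c * \<delta> powr (-(2 + a))) * ennreal (cmod (f w) powr p * Dd w powr q) \<partial>dA)"
    unfolding X_def
  proof (intro nn_integral_mono)
    fix w
    show "ennreal (kk c (2 + a + c) z w * (cmod (f w) powr p * Dd w powr q)) \<le> ennreal (2 powr c * \<delta> powr (-(2 + a))) * ennreal (cmod (f w) powr p * Dd w powr q)"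
    proof (cases "w \<in> ball 0 1")
      case True
      define L where "L = cmod (1 - cnj w * z)"
      have L\<delta>: "\<delta> \<le> L" using geo2'[of w z] True by (simp add: L_def \<delta>_def)
      have "kk c (2 + a + c) z w \<le> 2 powr c / L powr (2 + a)"
        using kk_le[OF z, of c a w] c by (simp add: L_def)
      also have "\<dots> \<le> 2 powr c / \<delta> powr (2 + a)"
        using L\<delta> \<delta> a by (intro divide_left_mono powr_mono2 mult_pos_pos) auto
      also have "\<dots> = 2 powr c * \<delta> powr (-(2 + a))" unfolding powr_minus by (simp add: divide_inverse)
      finally have "kk c (2 + a + c) z w * (cmod (f w) powr p * Dd w powr q) \<le> 2 powr c * \<delta> powr (-(2 + a)) * (cmod (f w) powr p * Dd w powr q)"
        by (intro mult_right_mono) auto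
      then show ?thesis by (simp add: ennreal_mult[symmetric])
    qed (simp add: kk_def)
  qed
  also have "\<dots> = ennreal (2 powr c * \<delta> powr (-(2 + a))) * (\<integral>\<^sup>+w. ennreal (cmod (f w) powr p * Dd w powr q) \<partial>dA)"
    by (rule nn_integral_cmult) measurable
  also have "\<dots> < \<infinity>" using fin by (simp add: ennreal_mult_less_top)
  finally have Xfin: "X < \<infinity>" .
  define X' where "X' = enn2real X"
  have XX': "X = ennreal X'" using Xfin by (simp add: X'_def less_top)
  have X'0: "X' \<ge> 0" by (simp add: X'_def)
  have Ybd: "Y \<le> ennreal (C1 a c * Dd z powr (-a))"
    unfolding Y_def k_def using Y_bound[OF z a] c by simp
  then have "Y < \<infinity>" using le_less_trans by fastforce
  define Y' where "Y' = enn2real Y"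
  have YY': "Y = ennreal Y'" using \<open>Y < \<infinity>\<close> by (simp add: Y'_def less_top)
  have Y'0: "Y' \<ge> 0" by (simp add: Y'_def)
  have C1p: "C1 a c > 0" using CF_pos[OF a] by (simp add: C1_def)
  have Y'bd: "Y' \<le> C1 a c * Dd z powr (-a)"
    using Ybd C1p unfolding YY' by (simp add: ennreal_le_iff)
  have H: "(\<integral>\<^sup>+w. ennreal (k w * G w) \<partial>dA) \<le> ennreal (Y' powr (1 - 1/p) * X' powr (1/p))"
    by (rule holder_nn[OF p km Gm k0 G0]) (use YY' XX' Xeq Y'0 X'0 in \<open>auto simp: Y_def\<close>)
  have "ennreal (cmod (T_op \<alpha> b f z)) \<le> (\<integral>\<^sup>+w. ennreal (norm (complex_of_real ((1 - (cmod w)\<^sup>2) powr (b - 1)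
                         / (cmod (1 - cnj w * z)) powr (\<alpha> + b)) * f w)) \<partial>dA)"
    unfolding T_op_def by (rule norm_integral_le_nn)
  also have "\<dots> = (\<integral>\<^sup>+w. indicator (ball 0 1) w * ennreal (norm (complex_of_real ((1 - (cmod w)\<^sup>2) powr (b - 1)
                         / (cmod (1 - cnj w * z)) powr (\<alpha> + b)) * f w)) \<partial>dA)"
    by (rule nn_integral_dA_restrict) measurable
  also have "\<dots> \<le> (\<integral>\<^sup>+w. ennreal (k w * G w) \<partial>dA)"
  proof (intro nn_integral_mono)
    fix w
    show "indicator (ball 0 1) w * ennreal (norm (complex_of_real ((1 - (cmod w)\<^sup>2) powr (b - 1)
                         / (cmod (1 - cnj w * z)) powr (\<alpha> + b)) * f w)) \<le> ennreal (k w * G w)"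
    proof (cases "w \<in> ball 0 1")
      case True
      then have Dp: "Dd w > 0" by (intro Dd_pos) simp
      have "norm (complex_of_real ((1 - (cmod w)\<^sup>2) powr (b - 1) / (cmod (1 - cnj w * z)) powr (\<alpha> + b)) * f w)
          = Dd w powr (b - 1) / (cmod (1 - cnj w * z)) powr (\<alpha> + b) * cmod (f w)"
        by (simp add: norm_mult norm_divide Dd_def)
      also have "\<dots> = k w * G w"
        using True Dp unfolding hc hab by (simp add: k_def G_def kk_def powr_add)
      finally show ?thesis using True by simp
    qed simp
  qed
  also note H
  finally have "cmod (T_op \<alpha> b f z) \<le> Y' powr (1 - 1/p) * X' powr (1/p)"
    by (simp add: ennreal_le_iff)
  then have "cmod (T_op \<alpha> b f z) powr p \<le> (Y' powr (1 - 1/p) * X' powr (1/p)) powr p"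
    using p by (intro powr_mono2) auto
  also have "\<dots> = Y' powr (p - 1) * X'"
  proof -
    have e1: "(1 - 1/p) * p = p - 1" using p by (simp add: field_simps)
    have e2: "1/p * p = 1" using p by simp
    have "(Y' powr (1 - 1/p) * X' powr (1/p)) powr p = (Y' powr (1 - 1/p)) powr p * (X' powr (1/p)) powr p"
      by (rule powr_mult)
    also have "\<dots> = Y' powr ((1 - 1/p) * p) * X' powr (1/p * p)" by (simp only: powr_powr)
    also have "\<dots> = Y' powr (p - 1) * X'" unfolding e1 e2 using X'0 by simp
    finally show ?thesis .
  qed
  also have "\<dots> \<le> (C1 a c * Dd z powr (-a)) powr (p - 1) * X'"
    using Y'bd Y'0 p X'0 by (intro mult_right_mono powr_mono2) auto
  also have "\<dots> = C1 a c powr (p - 1) * Dd z powr (-a * (p - 1)) * X'"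
    using C1p by (simp add: powr_mult powr_powr)
  finally have "cmod (T_op \<alpha> b f z) powr p * Dd z powr e \<le> C1 a c powr (p - 1) * Dd z powr (-a * (p - 1)) * X' * Dd z powr e"
    by (intro mult_right_mono) auto
  also have "\<dots> = C1 a c powr (p - 1) * Dd z powr a * X'"
  proof -
    have "Dd z powr (-a * (p - 1)) * Dd z powr e = Dd z powr a"
      using he by (simp add: powr_add[symmetric] algebra_simps)
    then show ?thesis by (simp add: mult_ac)
  qed
  finally have "ennreal (cmod (T_op \<alpha> b f z) powr p * Dd z powr e) \<le> ennreal (C1 a c powr (p - 1) * Dd z powr a * X')"
    by (rule ennreal_leI)
  also have "\<dots> = ennreal (C1 a c powr (p - 1)) * ennreal (Dd z powr a) * X"
    using X'0 by (simp add: XX' ennreal_mult)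
  finally show ?thesis unfolding X_def .
qed

lemma emeasure_density_dA_restrict:
  assumes [measurable]: "g \<in> borel_measurable borel" "S \<in> sets borel"
  shows "emeasure (density dA g) S = emeasure (density dA g) (S \<inter> ball 0 1)"
proof -
  have "emeasure (density dA g) S = (\<integral>\<^sup>+x. g x * indicator S x \<partial>dA)"
    by (rule emeasure_density) auto
  also have "\<dots> = (\<integral>\<^sup>+x. indicator (ball 0 1) x * (g x * indicator S x) \<partial>dA)"
    by (rule nn_integral_dA_restrict) measurable
  also have "\<dots> = (\<integral>\<^sup>+x. g x * indicator (S \<inter> ball 0 1) x \<partial>dA)"
    by (intro nn_integral_cong) (auto simp: indicator_def)
  also have "\<dots> = emeasure (density dA g) (S \<inter> ball 0 1)"
    by (rule emeasure_density[symmetric]) auto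
  finally show ?thesis .
qed

lemma ball_sub_box1: "ball 0 1 \<subseteq> carleson_box (- pi) 1"
proof -
  have "ball (cis 0) 3 \<inter> ball 0 1 \<subseteq> carleson_box (0 - pi * min 1 (2 * 3)) (min 1 (2 * 3))"
    by (rule ball_in_box) simp
  moreover have "ball (0::complex) 1 \<subseteq> ball (cis 0) 3"
  proof
    fix w :: complex assume "w \<in> ball 0 1"
    then have "cmod w < 1" by simp
    then have "cmod (1 - w) < 3" using norm_triangle_ineq4[of 1 w] by simp
    then show "w \<in> ball (cis 0) 3" by (simp add: dist_norm)
  qed
  ultimately show ?thesis by auto
qed

theorem lemma2p7:
  fixes K :: "real \<Rightarrow> real" and \<sigma> s p \<alpha> b :: real and f :: "complex \<Rightarrow> complex"
  assumes "standing_K K" and "condB K \<sigma>" and "0 < \<sigma>" and "\<sigma> < 2"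
    and "0 < s" and "s < 1" and "1 < p"
    and "(2 - s) / p + p / (p - 1) < \<alpha>"
    and "2 + p + (s - 2) / p < b"
    and "integrable dA f"
    and "K_Carleson K (density dA (\<lambda>z. ennreal ((cmod (f z)) powr p * (1 - (cmod z)\<^sup>2) powr (p - 2 + s))))"
  shows "K_Carleson K (density dA (\<lambda>z. ennreal ((cmod (T_op \<alpha> b f z)) powr p
                                     * (1 - (cmod z)\<^sup>2) powr (p * \<alpha> - 2 + s))))"
proof -
  note sK = assms(1) and cB = assms(2) and \<sigma>0 = assms(3) and \<sigma>2 = assms(4)
  note s0 = assms(5) and s1 = assms(6) and p = assms(7) and h\<alpha> = assms(8) and hb = assms(9)
  define q where "q = p - 2 + s"
  define a where "a = \<alpha> - (2 - s) / p"
  define c where "c = b - 1 - q / p"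
  define e where "e = p * \<alpha> - 2 + s"
  have p0: "p > 0" using p by simp
  have a0: "a > 0"
  proof -
    have "p / (p - 1) > 0" using p by simp
    then show ?thesis using h\<alpha> by (simp add: a_def)
  qed
  have c0: "c > 0"
  proof -
    have "c = b - 2 + (2 - s) / p" using p0 by (simp add: c_def q_def field_simps)
    moreover have "(s - 2) / p = - ((2 - s) / p)" by (metis minus_diff_eq minus_divide_left)
    ultimately show ?thesis using hb p by simp
  qed
  have hab: "\<alpha> + b = 2 + a + c" using p0 by (simp add: a_def c_def q_def field_simps)
  have hc: "b - 1 = c + q / p" by (simp add: c_def)
  have he: "e - a * (p - 1) = a" using p0 by (simp add: e_def a_def field_simps)
  have fm[measurable]: "f \<in> borel_measurable borel"
    using borel_measurable_integrable[OF assms(10)] by (simp add: measurable_cong_sets[OF sets_dA refl])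
  define h where "h w = cmod (f w) powr p * Dd w powr q" for w
  have hm[measurable]: "h \<in> borel_measurable borel" unfolding h_def by measurable
  have h0: "h w \<ge> 0" for w by (simp add: h_def)
  define \<nu> where "\<nu> = density dA (\<lambda>w. ennreal (h w))"
  have \<nu>eq: "density dA (\<lambda>z. ennreal ((cmod (f z)) powr p * (1 - (cmod z)\<^sup>2) powr (p - 2 + s))) = \<nu>"
    by (simp add: \<nu>_def h_def Dd_def q_def)
  obtain C0 where C0: "\<And>\<theta> l. 0 < l \<Longrightarrow> l \<le> 1 \<Longrightarrow> emeasure \<nu> (carleson_box \<theta> l) \<le> ennreal (C0 * K l)"
    using assms(11) unfolding K_Carleson_def \<nu>eq by blast
  define C0' where "C0' = max C0 0"
  have C0': "emeasure \<nu> (carleson_box \<theta> l) \<le> ennreal (C0' * K l)" if "0 < l" "l \<le> 1" for \<theta> l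
  proof -
    have "K l \<ge> 0" using sK that by (auto simp: standing_K_def)
    then have "C0 * K l \<le> C0' * K l" by (intro mult_right_mono) (auto simp: C0'_def)
    then have "ennreal (C0 * K l) \<le> ennreal (C0' * K l)" by (rule ennreal_leI)
    with C0[OF that, of \<theta>] show ?thesis by (rule order_trans)
  qed
  have sets_\<nu>[simp, measurable_cong]: "sets \<nu> = sets borel" by (simp add: \<nu>_def)
  have space_\<nu>[simp]: "space \<nu> = UNIV" by (simp add: \<nu>_def)
  have fin: "(\<integral>\<^sup>+w. ennreal (cmod (f w) powr p * Dd w powr q) \<partial>dA) < \<infinity>"
  proof -
    have "(\<integral>\<^sup>+w. ennreal (cmod (f w) powr p * Dd w powr q) \<partial>dA) = emeasure \<nu> UNIV"
      unfolding \<nu>_def by (subst emeasure_density) (auto simp: h_def)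
    also have "\<dots> = emeasure \<nu> (UNIV \<inter> ball 0 1)"
      unfolding \<nu>_def by (rule emeasure_density_dA_restrict) auto
    also have "\<dots> \<le> emeasure \<nu> (carleson_box (- pi) 1)"
      using ball_sub_box1 by (intro emeasure_mono) (auto intro: box_sets)
    also have "\<dots> \<le> ennreal (C0' * K 1)" by (rule C0') auto
    also have "\<dots> < \<infinity>" by simp
    finally show ?thesis .
  qed
  obtain CK where CK0: "CK \<ge> 0" and CK: "\<And>x t. 1 \<le> x \<Longrightarrow> 0 < t \<Longrightarrow> t \<le> 1 \<Longrightarrow> K (t * x) \<le> CK * x powr \<sigma> * K t"
    using K_scale[OF sK cB \<sigma>0] by blast
  define Cst where "Cst = C1 a c powr (p - 1)"
  have Cst0: "Cst \<ge> 0" by (simp add: Cst_def)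
  have CJ0: "CJ a c \<ge> 0" using CF_pos[OF c0] by (simp add: CJ_def max_def)
  define \<beta> where "\<beta> = 2 + a"
  define Cfinal where "Cfinal = Cst * CJ a c * (C0' * CK * 20 powr \<sigma>) * 2 powr \<beta> / (1 - 2 powr (\<sigma> - \<beta>))"
  show ?thesis
    unfolding K_Carleson_def
  proof (intro exI[of _ Cfinal] allI impI)
    fix \<theta> l :: real assume l: "0 < l \<and> l \<le> 1"
    then have l0: "0 < l" and l1: "l \<le> 1" by auto
    have box_m[measurable]: "carleson_box \<theta> l \<in> sets borel" using l by (intro box_sets) auto
    define \<zeta> where "\<zeta> = cis (\<theta> + pi * l)"
    define gT where "gT z = ennreal ((cmod (T_op \<alpha> b f z)) powr p * (1 - (cmod z)\<^sup>2) powr (p * \<alpha> - 2 + s))" for z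
    define \<Phi> where "\<Phi> z w = ennreal Cst * (indicator (carleson_box \<theta> l) z * ennreal (Dd z powr a) * ennreal (kk c (2 + a + c) z w * h w))" for z w
    have \<Phi>m: "(\<lambda>(z, w). \<Phi> z w) \<in> borel_measurable (dA \<Otimes>\<^sub>M dA)"
      unfolding \<Phi>_def case_prod_unfold by measurable
    define mn where "mn w = min 1 ((10 * l / cmod (w - \<zeta>)) powr \<beta>)" for w
    have "emeasure (density dA gT) (carleson_box \<theta> l) \<le> (\<integral>\<^sup>+z. gT z * indicator (carleson_box \<theta> l) z \<partial>dA)"
      by (rule emeasure_density_le)
    also have "\<dots> \<le> (\<integral>\<^sup>+z. (\<integral>\<^sup>+w. \<Phi> z w \<partial>dA) \<partial>dA)"
    proof (intro nn_integral_mono)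
      fix z
      show "gT z * indicator (carleson_box \<theta> l) z \<le> (\<integral>\<^sup>+w. \<Phi> z w \<partial>dA)"
      proof (cases "z \<in> carleson_box \<theta> l")
        case True
        have z: "cmod z < 1" using box_props[OF l0 l1 True] by simp
        have "gT z * indicator (carleson_box \<theta> l) z = ennreal (cmod (T_op \<alpha> b f z) powr p * Dd z powr e)"
          using True by (simp add: gT_def Dd_def e_def)
        also have "\<dots> \<le> ennreal Cst * ennreal (Dd z powr a) * (\<integral>\<^sup>+w. ennreal (kk c (2 + a + c) z w * h w) \<partial>dA)"
          unfolding Cst_def h_def by (rule T_pointwise[OF p a0 c0 hab hc he fm fin z])
        also have "\<dots> = (\<integral>\<^sup>+w. ennreal Cst * ennreal (Dd z powr a) * ennreal (kk c (2 + a + c) z w * h w) \<partial>dA)"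
          by (rule nn_integral_cmult[symmetric]) measurable
        also have "\<dots> = (\<integral>\<^sup>+w. \<Phi> z w \<partial>dA)"
          using True by (simp add: \<Phi>_def mult.assoc)
        finally show ?thesis .
      qed simp
    qed
    also have "\<dots> = (\<integral>\<^sup>+w. (\<integral>\<^sup>+z. \<Phi> z w \<partial>dA) \<partial>dA)"
      by (rule dA2.Fubini'[symmetric]) (use \<Phi>m in simp)
    also have "\<dots> \<le> (\<integral>\<^sup>+w. ennreal (h w) * ennreal (Cst * CJ a c * mn w) \<partial>dA)"
    proof (intro nn_integral_mono)
      fix w
      show "(\<integral>\<^sup>+z. \<Phi> z w \<partial>dA) \<le> ennreal (h w) * ennreal (Cst * CJ a c * mn w)"
      proof (cases "w \<in> ball 0 1")
        case True
        then have w: "cmod w < 1" by simp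
        have "(\<integral>\<^sup>+z. \<Phi> z w \<partial>dA) = (\<integral>\<^sup>+z. (ennreal Cst * ennreal (h w)) * (indicator (carleson_box \<theta> l) z * ennreal (Dd z powr a * Dd w powr c / cmod (1 - cnj w * z) powr (2 + a + c))) \<partial>dA)"
        proof (intro nn_integral_cong)
          fix z
          define X where "X = Dd z powr a * Dd w powr c / cmod (1 - cnj w * z) powr (2 + a + c)"
          have X0: "X \<ge> 0" by (simp add: X_def)
          have "Dd z powr a * (kk c (2 + a + c) z w * h w) = h w * X"
            using True by (simp add: kk_def X_def)
          then have eq1: "ennreal (Dd z powr a) * ennreal (kk c (2 + a + c) z w * h w) = ennreal (h w) * ennreal X"
            using h0[of w] X0 kk_nonneg[of c "2 + a + c" z w]
            by (simp add: ennreal_mult[symmetric])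
          have "\<Phi> z w = ennreal Cst * (indicator (carleson_box \<theta> l) z * (ennreal (Dd z powr a) * ennreal (kk c (2 + a + c) z w * h w)))"
            by (simp add: \<Phi>_def mult.assoc)
          also have "\<dots> = ennreal Cst * (indicator (carleson_box \<theta> l) z * (ennreal (h w) * ennreal X))"
            by (simp only: eq1)
          also have "\<dots> = (ennreal Cst * ennreal (h w)) * (indicator (carleson_box \<theta> l) z * ennreal X)"
            by (simp only: ac_simps)
          finally show "\<Phi> z w = (ennreal Cst * ennreal (h w)) * (indicator (carleson_box \<theta> l) z * ennreal (Dd z powr a * Dd w powr c / cmod (1 - cnj w * z) powr (2 + a + c)))"
            by (simp only: X_def)
        qed
        also have "\<dots> = (ennreal Cst * ennreal (h w)) * (\<integral>\<^sup>+z. indicator (carleson_box \<theta> l) z * ennreal (Dd z powr a * Dd w powr c / cmod (1 - cnj w * z) powr (2 + a + c)) \<partial>dA)"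
          by (rule nn_integral_cmult) measurable
        also have "\<dots> \<le> (ennreal Cst * ennreal (h w)) * ennreal (CJ a c * mn w)"
          unfolding mn_def \<zeta>_def \<beta>_def by (intro mult_left_mono J_bound a0 c0 l0 l1 w) auto
        also have "\<dots> = ennreal (h w) * ennreal (Cst * CJ a c * mn w)"
          using Cst0 CJ0 h0[of w] by (simp add: ennreal_mult[symmetric] mult_ac mn_def)
        finally show ?thesis .
      next
        case False
        then have "\<Phi> z w = 0" for z by (simp add: \<Phi>_def kk_def)
        then show ?thesis by simp
      qed
    qed
    also have "\<dots> = (\<integral>\<^sup>+w. ennreal (Cst * CJ a c * mn w) \<partial>\<nu>)"
      unfolding \<nu>_def by (rule nn_integral_density[symmetric]) (auto simp: mn_def)
    also have "\<dots> = ennreal (Cst * CJ a c) * (\<integral>\<^sup>+w. ennreal (mn w) \<partial>\<nu>)"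
      using Cst0 CJ0 by (subst nn_integral_cmult[symmetric]) (auto simp: mn_def ennreal_mult[symmetric] mult.assoc)
    also have "\<dots> \<le> ennreal (Cst * CJ a c) * ennreal ((C0' * CK * 20 powr \<sigma> * K l) * 2 powr \<beta> / (1 - 2 powr (\<sigma> - \<beta>)))"
    proof (intro mult_left_mono)
      show "(\<integral>\<^sup>+w. ennreal (mn w) \<partial>\<nu>) \<le> ennreal ((C0' * CK * 20 powr \<sigma> * K l) * 2 powr \<beta> / (1 - 2 powr (\<sigma> - \<beta>)))"
        unfolding mn_def
      proof (rule dyadic_integral)
        show "(\<lambda>w. cmod (w - \<zeta>)) \<in> borel_measurable \<nu>" by measurable
        show "0 < 10 * l" using l0 by simp
        show "0 \<le> \<sigma>" "\<sigma> < \<beta>" using \<sigma>0 \<sigma>2 a0 by (auto simp: \<beta>_def)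
        show "0 \<le> C0' * CK * 20 powr \<sigma> * K l"
          using CK0 sK l0 by (auto simp: C0'_def standing_K_def intro!: mult_nonneg_nonneg)
        fix k :: nat
        define r where "r = 10 * l * 2 ^ k"
        have r0: "r > 0" using l0 by (simp add: r_def)
        have "{x \<in> space \<nu>. cmod (x - \<zeta>) < 10 * l * 2 ^ k} = ball \<zeta> r"
          by (auto simp: r_def dist_norm norm_minus_commute)
        then have "emeasure \<nu> {x \<in> space \<nu>. cmod (x - \<zeta>) < 10 * l * 2 ^ k} = emeasure \<nu> (ball \<zeta> r \<inter> ball 0 1)"
          unfolding \<nu>_def by (simp add: emeasure_density_dA_restrict[of _ "ball \<zeta> r"])
        also have "\<dots> \<le> emeasure \<nu> (carleson_box (\<theta> + pi * l - pi * min 1 (2 * r)) (min 1 (2 * r)))"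
          using ball_in_box[OF r0, of "\<theta> + pi * l"] r0
          by (intro emeasure_mono) (auto simp: \<zeta>_def intro!: box_sets)
        also have "\<dots> \<le> ennreal (C0' * K (min 1 (2 * r)))"
          using r0 by (intro C0') auto
        also have "\<dots> \<le> ennreal (C0' * (CK * (20 * 2 ^ k) powr \<sigma> * K l))"
        proof (intro ennreal_leI mult_left_mono)
          have mono: "mono_on {0..} K" using sK by (simp add: standing_K_def)
          have "K (min 1 (2 * r)) \<le> K (l * (20 * 2 ^ k))"
            using r0 by (intro mono_onD[OF mono]) (auto simp: r_def)
          also have "\<dots> \<le> CK * (20 * 2 ^ k) powr \<sigma> * K l"
          proof (rule CK)
            have "(1::real) \<le> 2 ^ k" by simp
            then show "1 \<le> 20 * (2::real) ^ k" by linarith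
          qed (use l0 l1 in auto)
          finally show "K (min 1 (2 * r)) \<le> CK * (20 * 2 ^ k) powr \<sigma> * K l" .
        qed (simp add: C0'_def)
        also have "\<dots> = ennreal (C0' * CK * 20 powr \<sigma> * K l * (2 powr \<sigma>) ^ k)"
        proof -
          have "(20 * 2 ^ k) powr \<sigma> = 20 powr \<sigma> * (2 powr \<sigma>) ^ k"
            by (simp add: powr_mult powr_realpow[symmetric] powr_powr mult.commute powr_power)
          then show ?thesis by (simp add: mult_ac)
        qed
        finally show "emeasure \<nu> {x \<in> space \<nu>. cmod (x - \<zeta>) < 10 * l * 2 ^ k} \<le> ennreal (C0' * CK * 20 powr \<sigma> * K l * (2 powr \<sigma>) ^ k)" .
      qed
    qed simp
    also have "\<dots> = ennreal (Cfinal * K l)"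
    proof -
      have "2 powr (\<sigma> - \<beta>) < 1" using \<sigma>2 a0 by (simp add: \<beta>_def powr_less_one)
      then have "0 \<le> (C0' * CK * 20 powr \<sigma> * K l) * 2 powr \<beta> / (1 - 2 powr (\<sigma> - \<beta>))"
        using CK0 sK l0 by (auto simp: C0'_def standing_K_def intro!: mult_nonneg_nonneg divide_nonneg_nonneg)
      then show ?thesis using Cst0 CJ0
        by (simp add: ennreal_mult[symmetric] Cfinal_def mult_ac)
    qed
    finally show "emeasure (density dA (\<lambda>z. ennreal ((cmod (T_op \<alpha> b f z)) powr p
                                     * (1 - (cmod z)\<^sup>2) powr (p * \<alpha> - 2 + s)))) (carleson_box \<theta> l) \<le> ennreal (Cfinal * K l)"
      unfolding gT_def .
  qed
qed


end
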